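(* For all $j,k\geq2$ with $j<k$, $\mathsf{TS}^1_j\nleq_{\mathrm{W}}\mathsf{TS}^1_k$.
   Context: For $k\geq2$, $\mathsf{TS}^1_k$ is the problem whose instances are colorings $f:\omega\to k$ and whose solutions are infinite sets $S$ together with a color $c<k$ such that $f(x)\neq c$ for all $x\in S$ (thin sets). $\mathsf{P}\leq_{\mathrm{W}}\mathsf{Q}$ means there are Turing functionals $\Phi,\Psi$ such that for every instance $A$ of $\mathsf{P}$, $\Phi(A)$ is an instance of $\mathsf{Q}$, and for every solution $T$ to $\Phi(A)$, $\Psi(A\oplus T)$ is a solution to $A$. *)

theory Defs
  imports Main
begin

text \<open>Oracle mu-recursive functions: a standard model of Turing functionals.
  Oracles are total functions nat => nat (sets are given by characteristic functions).\<close>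

datatype recf =
    Z
  | S
  | Id nat
  | Orc
  | Cn recf "recf list"
  | Pr recf recf
  | Mn recf

inductive eval :: "(nat \<Rightarrow> nat) \<Rightarrow> recf \<Rightarrow> nat list \<Rightarrow> nat \<Rightarrow> bool" for X where
  eval_Z: "eval X Z xs 0"
| eval_S: "eval X S (x # xs) (Suc x)"
| eval_Id: "i < length xs \<Longrightarrow> eval X (Id i) xs (xs ! i)"
| eval_Orc: "eval X Orc (x # xs) (X x)"
| eval_Cn: "length ys = length gs \<Longrightarrow> (\<forall>i < length gs. eval X (gs ! i) xs (ys ! i))
             \<Longrightarrow> eval X f ys r \<Longrightarrow> eval X (Cn f gs) xs r"
| eval_Pr0: "eval X f xs r \<Longrightarrow> eval X (Pr f g) (0 # xs) r"
| eval_PrS: "eval X (Pr f g) (n # xs) r \<Longrightarrow> eval X g (n # r # xs) s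
             \<Longrightarrow> eval X (Pr f g) (Suc n # xs) s"
| eval_Mn: "eval X f (n # xs) 0 \<Longrightarrow> (\<forall>m < n. \<exists>y. eval X f (m # xs) (Suc y))
             \<Longrightarrow> eval X (Mn f) xs n"

definition fn_total :: "recf \<Rightarrow> (nat \<Rightarrow> nat) \<Rightarrow> bool" where
  "fn_total e X \<longleftrightarrow> (\<forall>n. \<exists>y. eval X e [n] y)"

definition fn_app :: "recf \<Rightarrow> (nat \<Rightarrow> nat) \<Rightarrow> (nat \<Rightarrow> nat)" where
  "fn_app e X = (\<lambda>n. THE y. eval X e [n] y)"

definition join :: "(nat \<Rightarrow> nat) \<Rightarrow> (nat \<Rightarrow> nat) \<Rightarrow> (nat \<Rightarrow> nat)" where
  "join A B = (\<lambda>n. if even n then A (n div 2) else B (n div 2))"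

text \<open>A problem: a predicate on instances and a solution relation (instance, solution).\<close>
type_synonym problem = "((nat \<Rightarrow> nat) \<Rightarrow> bool) \<times> ((nat \<Rightarrow> nat) \<Rightarrow> (nat \<Rightarrow> nat) \<Rightarrow> bool)"

definition weihrauch_le :: "problem \<Rightarrow> problem \<Rightarrow> bool" where
  "weihrauch_le P Q \<longleftrightarrow>
     (\<exists>\<Phi> \<Psi>. \<forall>A. fst P A \<longrightarrow>
        fn_total \<Phi> A \<and> fst Q (fn_app \<Phi> A) \<and>
        (\<forall>T. snd Q (fn_app \<Phi> A) T \<longrightarrow>
             fn_total \<Psi> (join A T) \<and> snd P A (fn_app \<Psi> (join A T))))"

text \<open>TS^1_k. Instances: colourings f : omega -> k. Solutions: pairs (S, c), encoded as
  T with T 0 = c and T (n+1) the characteristic function of S at n.\<close>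
definition TS1 :: "nat \<Rightarrow> problem" where
  "TS1 k = ((\<lambda>f. \<forall>x. f x < k),
            (\<lambda>f T. T 0 < k \<and> (\<forall>n. T (Suc n) \<le> 1) \<and> infinite {n. T (Suc n) = 1}
                   \<and> (\<forall>n. T (Suc n) = 1 \<longrightarrow> f n \<noteq> T 0)))"

end

theory Submission imports Defs begin

lemma eval_det: "eval X e xs y \<Longrightarrow> eval X e xs y' \<Longrightarrow> y = y'"
proof (induction arbitrary: y' rule: eval.induct)
  case (eval_Z xs) then show ?case by (cases rule: eval.cases) auto
next
  case (eval_S x xs) then show ?case by (cases rule: eval.cases) auto
next
  case (eval_Id i xs) from eval_Id.prems show ?case by (cases rule: eval.cases) auto
next
  case (eval_Orc x xs) then show ?case by (cases rule: eval.cases) auto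
next
  case (eval_Cn ys gs xs f r)
  from eval_Cn.prems obtain ys' where a: "length ys' = length gs"
    "\<forall>i<length gs. eval X (gs ! i) xs (ys' ! i)" "eval X f ys' y'"
    by (cases rule: eval.cases) auto
  have "ys = ys'"
  proof (rule nth_equalityI)
    show "length ys = length ys'" using a eval_Cn.hyps(1) by simp
    fix i assume "i < length ys"
    then have "i < length gs" using eval_Cn.hyps(1) by simp
    then show "ys ! i = ys' ! i" using a(2) eval_Cn.IH(1) by blast
  qed
  then show ?case using eval_Cn.IH a by auto
next
  case (eval_Pr0 f xs r g)
  from eval_Pr0.prems have "eval X f xs y'" by (cases rule: eval.cases) auto
  then show ?case using eval_Pr0.IH by auto
next
  case (eval_PrS f g n xs r s)
  from eval_PrS.prems obtain r' where "eval X (Pr f g) (n # xs) r'" "eval X g (n # r' # xs) y'"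
    by (cases rule: eval.cases) auto
  then show ?case using eval_PrS.IH by auto
next
  case (eval_Mn f n xs)
  from eval_Mn.prems have b: "eval X f (y' # xs) 0 \<and> (\<forall>m<y'. \<exists>y. eval X f (m # xs) (Suc y))"
    by (cases rule: eval.cases) auto
  show ?case
  proof (rule ccontr)
    assume "n \<noteq> y'"
    then consider "n < y'" | "y' < n" by linarith
    then show False
    proof cases
      case 1
      then obtain y where "eval X f (n # xs) (Suc y)" using b by blast
      then show False using eval_Mn.IH(1) by fastforce
    next
      case 2
      then obtain y where "eval X f (y' # xs) (Suc y)" "\<forall>z. eval X f (y' # xs) z \<longrightarrow> Suc y = z"
        using eval_Mn.IH(2) by blast
      then show False using b by fastforce
    qed
  qed
qed

lemma eval_use: "eval X e xs y \<Longrightarrow> \<exists>U. finite U \<and> (\<forall>Y. (\<forall>q\<in>U. Y q = X q) \<longrightarrow> eval Y e xs y)"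
proof (induction rule: eval.induct)
  case (eval_Z xs) then show ?case by (auto intro: eval.intros)
next
  case (eval_S x xs) then show ?case by (auto intro: eval.intros)
next
  case (eval_Id i xs) then show ?case by (auto intro: eval.intros)
next
  case (eval_Orc x xs)
  show ?case
  proof (intro exI[of _ "{x}"] conjI allI impI)
    fix Y assume "\<forall>q\<in>{x}. Y q = X q"
    then have "Y x = X x" by simp
    then show "eval Y Orc (x # xs) (X x)" using eval.eval_Orc[of Y x xs] by simp
  qed simp
next
  case (eval_Cn ys gs xs f r)
  from eval_Cn.IH(1) have "\<forall>i<length gs. \<exists>U. finite U \<and> (\<forall>Y. (\<forall>q\<in>U. Y q = X q) \<longrightarrow> eval Y (gs ! i) xs (ys ! i))"
    by blast
  then obtain Uf where Uf: "\<forall>i<length gs. finite (Uf i) \<and> (\<forall>Y. (\<forall>q\<in>Uf i. Y q = X q) \<longrightarrow> eval Y (gs ! i) xs (ys ! i))"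
    by metis
  obtain U0 where U0: "finite U0" "\<forall>Y. (\<forall>q\<in>U0. Y q = X q) \<longrightarrow> eval Y f ys r" using eval_Cn.IH(2) by blast
  show ?case
  proof (intro exI[of _ "U0 \<union> (\<Union>i<length gs. Uf i)"] conjI allI impI)
    show "finite (U0 \<union> (\<Union>i<length gs. Uf i))" using U0 Uf by auto
    fix Y assume h: "\<forall>q\<in>U0 \<union> (\<Union>i<length gs. Uf i). Y q = X q"
    show "eval Y (Cn f gs) xs r"
    proof (rule eval.eval_Cn[OF eval_Cn.hyps(1)])
      show "\<forall>i<length gs. eval Y (gs ! i) xs (ys ! i)"
      proof (intro allI impI)
        fix i assume i: "i < length gs"
        then have "\<forall>q\<in>Uf i. Y q = X q" using h by auto
        then show "eval Y (gs ! i) xs (ys ! i)" using Uf i by blast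
      qed
      show "eval Y f ys r" using h U0 by auto
    qed
  qed
next
  case (eval_Pr0 f xs r g)
  then obtain U where "finite U" "\<forall>Y. (\<forall>q\<in>U. Y q = X q) \<longrightarrow> eval Y f xs r" by blast
  then show ?case by (auto intro: eval.intros)
next
  case (eval_PrS f g n xs r s)
  then obtain U1 U2 where "finite U1" "\<forall>Y. (\<forall>q\<in>U1. Y q = X q) \<longrightarrow> eval Y (Pr f g) (n # xs) r"
    "finite U2" "\<forall>Y. (\<forall>q\<in>U2. Y q = X q) \<longrightarrow> eval Y g (n # r # xs) s" by blast
  then show ?case by (intro exI[of _ "U1 \<union> U2"]) (auto intro: eval.intros)
next
  case (eval_Mn f n xs)
  from eval_Mn.IH(2) have "\<forall>m<n. \<exists>y U. finite U \<and> (\<forall>Y. (\<forall>q\<in>U. Y q = X q) \<longrightarrow> eval Y f (m # xs) (Suc y))"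
    by blast
  then obtain yf Uf where Uf: "\<forall>m<n. finite (Uf m) \<and> (\<forall>Y. (\<forall>q\<in>Uf m. Y q = X q) \<longrightarrow> eval Y f (m # xs) (Suc (yf m)))"
    by metis
  obtain U0 where U0: "finite U0" "\<forall>Y. (\<forall>q\<in>U0. Y q = X q) \<longrightarrow> eval Y f (n # xs) 0" using eval_Mn.IH(1) by blast
  show ?case
  proof (intro exI[of _ "U0 \<union> (\<Union>m<n. Uf m)"] conjI allI impI)
    show "finite (U0 \<union> (\<Union>m<n. Uf m))" using U0 Uf by auto
    fix Y assume h: "\<forall>q\<in>U0 \<union> (\<Union>m<n. Uf m). Y q = X q"
    show "eval Y (Mn f) xs n"
    proof (rule eval.eval_Mn)
      show "eval Y f (n # xs) 0" using h U0 by auto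
      show "\<forall>m<n. \<exists>y. eval Y f (m # xs) (Suc y)"
      proof (intro allI impI)
        fix m assume m: "m < n"
        then have "\<forall>q\<in>Uf m. Y q = X q" using h by auto
        then show "\<exists>y. eval Y f (m # xs) (Suc y)" using Uf m by blast
      qed
    qed
  qed
qed


definition pad :: "(nat \<Rightarrow> nat) \<Rightarrow> nat \<Rightarrow> nat \<Rightarrow> nat \<Rightarrow> nat" where
  "pad g N d = (\<lambda>n. if n < N then g n else d)"

definition extp :: "(nat \<Rightarrow> nat) \<Rightarrow> nat \<Rightarrow> (nat \<Rightarrow> nat) \<Rightarrow> nat \<Rightarrow> bool" where
  "extp g' N' g N \<longleftrightarrow> N \<le> N' \<and> (\<forall>n<N. g' n = g n)"

lemma extp_refl: "extp g N g N" by (simp add: extp_def)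

lemma extp_trans: "extp g'' N'' g' N' \<Longrightarrow> extp g' N' g N \<Longrightarrow> extp g'' N'' g N"
  by (auto simp: extp_def)

lemma key:
  fixes Ph :: "(nat \<Rightarrow> nat) \<Rightarrow> nat \<Rightarrow> nat"
  assumes "j < k" "0 < j"
  shows "\<exists>g N c. c < k \<and> (\<forall>n. g n < j) \<and> (\<forall>g' N' d. extp g' N' g N \<and> (\<forall>n. g' n < j) \<and> d < j \<longrightarrow>
     (\<exists>g'' N''. extp g'' N'' g' N' \<and> (\<forall>n. g'' n < j) \<and> infinite {n. Ph (pad g'' N'' d) n \<noteq> c}))"
proof (rule ccontr)
  assume H: "\<not> ?thesis"
  have H': "\<forall>g N c. c < k \<and> (\<forall>n. g n < j) \<longrightarrow> (\<exists>g' N' d. extp g' N' g N \<and> (\<forall>n. g' n < j) \<and> d < j \<and>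
     (\<forall>g'' N''. extp g'' N'' g' N' \<and> (\<forall>n. g'' n < j) \<longrightarrow> finite {n. Ph (pad g'' N'' d) n \<noteq> c}))"
    using H by (simp add: not_less) (metis not_le)
  have claim: "\<exists>g N ds. (\<forall>n. g n < j) \<and> (\<forall>i<m. ds i < j \<and> (\<forall>g'' N''. extp g'' N'' g N \<and> (\<forall>n. g'' n < j)
     \<longrightarrow> finite {n. Ph (pad g'' N'' (ds i)) n \<noteq> i}))" if "m \<le> k" for m
    using that
  proof (induction m)
    case 0
    show ?case using assms(2) by (intro exI[of _ "\<lambda>_. 0"]) auto
  next
    case (Suc m)
    then obtain g N ds where IH: "\<forall>n. g n < j" "\<forall>i<m. ds i < j \<and> (\<forall>g'' N''. extp g'' N'' g N \<and> (\<forall>n. g'' n < j)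
     \<longrightarrow> finite {n. Ph (pad g'' N'' (ds i)) n \<noteq> i})" by auto
    have "m < k" using Suc.prems by simp
    then obtain g' N' d where G: "extp g' N' g N" "\<forall>n. g' n < j" "d < j"
      "\<forall>g'' N''. extp g'' N'' g' N' \<and> (\<forall>n. g'' n < j) \<longrightarrow> finite {n. Ph (pad g'' N'' d) n \<noteq> m}"
      using H' IH(1) by blast
    have B: "\<forall>i<Suc m. (ds(m := d)) i < j \<and> (\<forall>g'' N''. extp g'' N'' g' N' \<and> (\<forall>n. g'' n < j) \<longrightarrow> finite {n. Ph (pad g'' N'' ((ds(m := d)) i)) n \<noteq> i})"
    proof (intro allI impI)
      fix i assume i: "i < Suc m"
      show "(ds(m := d)) i < j \<and> (\<forall>g'' N''. extp g'' N'' g' N' \<and> (\<forall>n. g'' n < j) \<longrightarrow> finite {n. Ph (pad g'' N'' ((ds(m := d)) i)) n \<noteq> i})"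
      proof (cases "i = m")
        case True then show ?thesis using G(3,4) by simp
      next
        case False
        then have "i < m" using i by simp
        then show ?thesis using IH(2) G(1) extp_trans False by auto
      qed
    qed
    show ?case using G(2) B by blast
  qed
  obtain g N ds where C: "\<forall>n. g n < j" "\<forall>i<k. ds i < j \<and> (\<forall>g'' N''. extp g'' N'' g N \<and> (\<forall>n. g'' n < j)
     \<longrightarrow> finite {n. Ph (pad g'' N'' (ds i)) n \<noteq> i})" using claim[of k] by auto
  have "ds ` {..<k} \<subseteq> {..<j}" using C(2) by auto
  then have "card (ds ` {..<k}) \<le> j" by (metis card_lessThan card_mono finite_lessThan)
  then have "\<not> inj_on ds {..<k}" using assms(1) card_image by fastforce
  then obtain i1 i2 where I: "i1 < k" "i2 < k" "i1 \<noteq> i2" "ds i1 = ds i2"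
    unfolding inj_on_def by auto
  have f1: "finite {n. Ph (pad g N (ds i1)) n \<noteq> i1}" using C I extp_refl by blast
  have f2: "finite {n. Ph (pad g N (ds i1)) n \<noteq> i2}" using C I extp_refl by metis
  have "UNIV \<subseteq> {n. Ph (pad g N (ds i1)) n \<noteq> i1} \<union> {n. Ph (pad g N (ds i1)) n \<noteq> i2}"
    using I(3) by auto
  then have "finite (UNIV :: nat set)" using f1 f2 finite_subset by blast
  then show False by simp
qed

lemma eval_app: "fn_total e X \<Longrightarrow> eval X e [n] (fn_app e X n)"
  unfolding fn_total_def fn_app_def by (metis eval_det theI)

lemma app_eq: "eval X e [n] y \<Longrightarrow> fn_app e X n = y"
  unfolding fn_app_def by (metis eval_det the_equality)

lemma finite_bound: "finite (U :: nat set) \<Longrightarrow> \<exists>b. \<forall>q\<in>U. q < b"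
  using finite_nat_set_iff_bounded by blast

theorem theorem5p18:
  fixes j k :: nat
  assumes "2 \<le> j" and "2 \<le> k" and "j < k"
  shows "\<not> weihrauch_le (TS1 j) (TS1 k)"
proof
  assume "weihrauch_le (TS1 j) (TS1 k)"
  then obtain \<Phi> \<Psi> where W: "\<forall>A. (\<forall>x. A x < j) \<longrightarrow> fn_total \<Phi> A \<and> (\<forall>x. fn_app \<Phi> A x < k) \<and>
    (\<forall>T. (T 0 < k \<and> (\<forall>n. T (Suc n) \<le> 1) \<and> infinite {n. T (Suc n) = 1} \<and> (\<forall>n. T (Suc n) = 1 \<longrightarrow> fn_app \<Phi> A n \<noteq> T 0))
      \<longrightarrow> fn_total \<Psi> (join A T) \<and> (fn_app \<Psi> (join A T) 0 < j \<and> (\<forall>n. fn_app \<Psi> (join A T) (Suc n) \<le> 1)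
          \<and> infinite {n. fn_app \<Psi> (join A T) (Suc n) = 1}
          \<and> (\<forall>n. fn_app \<Psi> (join A T) (Suc n) = 1 \<longrightarrow> A n \<noteq> fn_app \<Psi> (join A T) 0)))"
    unfolding weihrauch_le_def TS1_def fst_conv snd_conv by blast
  define Ph where "Ph = fn_app \<Phi>"
  define TA where "TA c A = (\<lambda>n. case n of 0 \<Rightarrow> c | Suc m \<Rightarrow> if Ph A m \<noteq> c then 1 else 0)" for c A
  have sol: "fn_total \<Psi> (join A (TA c A)) \<and> fn_app \<Psi> (join A (TA c A)) 0 < j
     \<and> infinite {n. fn_app \<Psi> (join A (TA c A)) (Suc n) = 1}
     \<and> (\<forall>n. fn_app \<Psi> (join A (TA c A)) (Suc n) = 1 \<longrightarrow> A n \<noteq> fn_app \<Psi> (join A (TA c A)) 0)"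
    if "\<forall>x. A x < j" "c < k" "infinite {n. Ph A n \<noteq> c}" for A c
  proof -
    have "{n. TA c A (Suc n) = 1} = {n. Ph A n \<noteq> c}" by (auto simp: TA_def)
    then have "TA c A 0 < k \<and> (\<forall>n. TA c A (Suc n) \<le> 1) \<and> infinite {n. TA c A (Suc n) = 1}
       \<and> (\<forall>n. TA c A (Suc n) = 1 \<longrightarrow> fn_app \<Phi> A n \<noteq> TA c A 0)"
      using that by (auto simp: TA_def Ph_def)
    then show ?thesis using W that(1) by blast
  qed
  have j0: "0 < j" using assms by simp
  obtain g N c where K: "c < k" "\<forall>n. g n < j" "\<forall>g' N' d. extp g' N' g N \<and> (\<forall>n. g' n < j) \<and> d < j \<longrightarrow>
     (\<exists>g'' N''. extp g'' N'' g' N' \<and> (\<forall>n. g'' n < j) \<and> infinite {n. Ph (pad g'' N'' d) n \<noteq> c})"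
    using key[OF assms(3) j0, of Ph] by blast
  obtain g1 N1 where G1: "extp g1 N1 g N" "\<forall>n. g1 n < j" "infinite {n. Ph (pad g1 N1 0) n \<noteq> c}"
    using K(2,3) extp_refl j0 by blast
  define A0 where "A0 = pad g1 N1 0"
  define T0 where "T0 = TA c A0"
  have vA0: "\<forall>x. A0 x < j" using G1(2) j0 by (simp add: A0_def pad_def)
  have S0: "fn_total \<Psi> (join A0 T0)" "fn_app \<Psi> (join A0 T0) 0 < j"
    using sol[OF vA0 K(1)] G1(3) by (auto simp: T0_def A0_def)
  define d where "d = fn_app \<Psi> (join A0 T0) 0"
  have "eval (join A0 T0) \<Psi> [0] d" unfolding d_def by (rule eval_app[OF S0(1)])
  from eval_use[OF this] obtain U where U: "finite U" "\<forall>Y. (\<forall>q\<in>U. Y q = join A0 T0 q) \<longrightarrow> eval Y \<Psi> [0] d"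
    by blast
  obtain b where b: "\<forall>q\<in>U. q < b" using finite_bound[OF U(1)] by blast
  have tot0: "fn_total \<Phi> A0" using mp[OF spec[OF W, of A0] vA0] by (rule conjunct1)
  have ex: "\<forall>m<b. \<exists>V. finite V \<and> (\<forall>Y. (\<forall>q\<in>V. Y q = A0 q) \<longrightarrow> eval Y \<Phi> [m] (Ph A0 m))"
  proof (intro allI impI)
    fix m assume "m < b"
    have "eval A0 \<Phi> [m] (Ph A0 m)" unfolding Ph_def by (rule eval_app[OF tot0])
    then show "\<exists>V. finite V \<and> (\<forall>Y. (\<forall>q\<in>V. Y q = A0 q) \<longrightarrow> eval Y \<Phi> [m] (Ph A0 m))" by (rule eval_use)
  qed
  define Vf where "Vf m = (SOME V. finite V \<and> (\<forall>Y. (\<forall>q\<in>V. Y q = A0 q) \<longrightarrow> eval Y \<Phi> [m] (Ph A0 m)))" for m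
  have Vf: "\<forall>m<b. finite (Vf m) \<and> (\<forall>Y. (\<forall>q\<in>Vf m. Y q = A0 q) \<longrightarrow> eval Y \<Phi> [m] (Ph A0 m))"
  proof (intro allI impI)
    fix m assume "m < b"
    then have e: "\<exists>V. finite V \<and> (\<forall>Y. (\<forall>q\<in>V. Y q = A0 q) \<longrightarrow> eval Y \<Phi> [m] (Ph A0 m))"
      using ex by blast
    show "finite (Vf m) \<and> (\<forall>Y. (\<forall>q\<in>Vf m. Y q = A0 q) \<longrightarrow> eval Y \<Phi> [m] (Ph A0 m))"
      unfolding Vf_def by (fact someI_ex[OF e])
  qed
  have "finite (\<Union>m<b. Vf m)" using Vf by auto
  then obtain N2' where N2': "\<forall>q\<in>(\<Union>m<b. Vf m). q < N2'" using finite_bound by blast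
  define N2 where "N2 = max (max N1 N2') b"
  have e2: "extp A0 N2 g N" using G1(1) by (auto simp: extp_def A0_def pad_def N2_def)
  obtain g3 N3 where G3: "extp g3 N3 A0 N2" "\<forall>n. g3 n < j" "infinite {n. Ph (pad g3 N3 d) n \<noteq> c}"
  proof -
    have "d < j" using S0(2) d_def by simp
    then have "\<exists>g'' N''. extp g'' N'' A0 N2 \<and> (\<forall>n. g'' n < j) \<and> infinite {n. Ph (pad g'' N'' d) n \<noteq> c}"
      using K(3)[rule_format, OF conjI[OF e2 conjI[OF vA0]]] by blast
    then show ?thesis using that by blast
  qed
  define A where "A = pad g3 N3 d"
  have vA: "\<forall>x. A x < j" using G3(2) S0(2) d_def by (simp add: A_def pad_def)
  have agree: "A n = A0 n" if "n < N2" for n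
    using G3(1) that by (auto simp: extp_def A_def pad_def)
  have PhEq: "Ph A m = Ph A0 m" if "m < b" for m
  proof -
    have "\<forall>q\<in>Vf m. A q = A0 q" using agree N2' that N2_def by fastforce
    then have "eval A \<Phi> [m] (Ph A0 m)" using Vf that by blast
    then show ?thesis unfolding Ph_def by (rule app_eq)
  qed
  have "\<forall>q\<in>U. join A (TA c A) q = join A0 T0 q"
  proof
    fix q assume q: "q \<in> U"
    then have qb: "q div 2 < b" using b by fastforce
    show "join A (TA c A) q = join A0 T0 q"
    proof (cases "even q")
      case True
      then show ?thesis using agree qb by (simp add: join_def N2_def)
    next
      case False
      show ?thesis
      proof (cases "q div 2")
        case 0 then show ?thesis using False by (simp add: join_def TA_def T0_def)
      next
        case (Suc m)
        then have "m < b" using qb by simp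
        then show ?thesis using False Suc PhEq by (simp add: join_def TA_def T0_def)
      qed
    qed
  qed
  then have "eval (join A (TA c A)) \<Psi> [0] d" using U(2) by blast
  then have R0: "fn_app \<Psi> (join A (TA c A)) 0 = d" by (rule app_eq)
  have S: "infinite {n. fn_app \<Psi> (join A (TA c A)) (Suc n) = 1}"
     "\<forall>n. fn_app \<Psi> (join A (TA c A)) (Suc n) = 1 \<longrightarrow> A n \<noteq> fn_app \<Psi> (join A (TA c A)) 0"
    using sol[OF vA K(1)] G3(3) by (auto simp: A_def)
  have "{n. fn_app \<Psi> (join A (TA c A)) (Suc n) = 1} \<subseteq> {..<N3}"
  proof
    fix n assume "n \<in> {n. fn_app \<Psi> (join A (TA c A)) (Suc n) = 1}"
    then have "A n \<noteq> d" using S(2) R0 by auto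
    then show "n \<in> {..<N3}" by (auto simp: A_def pad_def split: if_splits)
  qed
  then show False using S(1) finite_subset by blast
qed

end
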